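(* Let $c\ge2$ and let $\Gamma$ be a $c$-uniform unoriented hypergraph with $E\neq\varnothing$, strong coloring number $\chi=\chi(\Gamma)$ and smallest normalized Laplacian eigenvalue $\lambda_1$. (1) If $\chi=c$, then $\lambda_1=0$, and $0$ is an eigenvalue of $L$ with multiplicity at least $c-1$. (2) If $\lambda_1=0$, then $\chi=\dfrac{c-\lambda_1}{1-\lambda_1}$ holds if and only if $\chi=c$.
   Context: A hypergraph here is a finite vertex set $V$, $|V|=N$, with an edge set $E\subseteq\mathcal P(V)$. It is $c$-uniform if $|e|=c$ for all $e\in E$, and unoriented means all vertex–edge incidences have orientation $+1$. The degree is $\deg v=|\{e\in E: v\in e\}|$, assumed $\ge1$ for all $v$; $D=\mathrm{diag}(\deg v)$. The adjacency matrix has $A_{v,v}=0$ and, for $v\neq w$, $A_{v,w}=-|\{e\in E: v,w\in e\}|$. The normalized Laplacian is $L=\mathrm{Id}-D^{-1}A$, with real eigenvalues $\lambda_1\le\dots\le\lambda_N$ (for such $\Gamma$ one has $\lambda_N=c$ and $0\le\lambda_1<1$). A proper strong $k$-coloring is a map $V\to\{1,\dots,k\}$ such that any two distinct vertices in a common edge receive different colors; $\chi(\Gamma)$ is the least such $k$. *)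

theory Defs
  imports "Jordan_Normal_Form.Char_Poly"
begin

text \<open>Hypergraphs on the vertex set V = {0..<N}; edges are sets of vertices.\<close>

definition hdeg :: "nat set set \<Rightarrow> nat \<Rightarrow> nat" where
  "hdeg E v = card {e \<in> E. v \<in> e}"

definition hadj :: "nat \<Rightarrow> nat set set \<Rightarrow> real mat" where
  "hadj N E = mat N N (\<lambda>(v,w). if v = w then 0
       else - real (card {e \<in> E. v \<in> e \<and> w \<in> e}))"

definition hdegmat :: "nat \<Rightarrow> nat set set \<Rightarrow> real mat" where
  "hdegmat N E = mat N N (\<lambda>(v,w). if v = w then real (hdeg E v) else 0)"

definition nlap :: "nat \<Rightarrow> nat set set \<Rightarrow> real mat" where
  "nlap N E = 1\<^sub>m N - mat N N (\<lambda>(v,w). if v = w then 1 / real (hdeg E v) else 0) * hadj N E"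

definition lambda1 :: "nat \<Rightarrow> nat set set \<Rightarrow> real" where
  "lambda1 N E = Min {x. eigenvalue (nlap N E) x}"

definition proper_strong_coloring :: "nat \<Rightarrow> nat set set \<Rightarrow> nat \<Rightarrow> (nat \<Rightarrow> nat) \<Rightarrow> bool" where
  "proper_strong_coloring N E k f \<longleftrightarrow>
     (\<forall>v<N. f v \<in> {1..k}) \<and> (\<forall>e\<in>E. \<forall>v\<in>e. \<forall>w\<in>e. v \<noteq> w \<longrightarrow> f v \<noteq> f w)"

definition strong_chromatic :: "nat \<Rightarrow> nat set set \<Rightarrow> nat" where
  "strong_chromatic N E = (LEAST k. \<exists>f. proper_strong_coloring N E k f)"

definition uniform_hypergraph :: "nat \<Rightarrow> nat set set \<Rightarrow> nat \<Rightarrow> bool" where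
  "uniform_hypergraph N E c \<longleftrightarrow>
     E \<subseteq> Pow {0..<N} \<and> (\<forall>e\<in>E. card e = c) \<and> (\<forall>v<N. hdeg E v \<ge> 1)"

end

theory Submission imports Defs begin

lemma char_poly_zero_cols:
  fixes A :: "'a::idom mat"
  assumes A: "A \<in> carrier_mat n n" and S: "S \<subseteq> {0..<n}"
    and z: "\<And>i j. i \<in> S \<Longrightarrow> j < n \<Longrightarrow> A $$ (j,i) = 0"
  shows "[:0,1:]^card S dvd char_poly A"
proof -
  let ?T = "transpose_mat A"
  let ?C = "char_poly_matrix ?T"
  have T: "?T \<in> carrier_mat n n" using A by auto
  have C: "?C \<in> carrier_mat n n" using T by simp
  have "char_poly A = char_poly ?T" using char_poly_transpose_mat[OF A] by simp
  also have "\<dots> = (\<Sum> p \<in> {p. p permutes {0..<n}}. signof p * (\<Prod> i=0..<n. ?C $$ (i, p i)))"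
    unfolding char_poly_def by (rule det_def'[OF C])
  finally have eq: "char_poly A = \<dots>" .
  have "[:0,1:]^card S dvd (\<Sum> p \<in> {p. p permutes {0..<n}}. signof p * (\<Prod> i=0..<n. ?C $$ (i, p i)))"
  proof (rule dvd_sum)
    fix p assume "p \<in> {p. p permutes {0..<n}}"
    hence p: "p permutes {0..<n}" by simp
    have pi: "i < n \<Longrightarrow> p i < n" for i using p by (simp add: permutes_in_image)
    have split: "(\<Prod> i=0..<n. ?C $$ (i, p i)) = (\<Prod> i\<in>S. ?C $$ (i, p i)) * (\<Prod> i\<in>{0..<n}-S. ?C $$ (i, p i))"
      using S by (metis (no_types, lifting) finite_atLeastLessThan mult.commute prod.subset_diff)
    have "(\<Prod> i\<in>S. ?C $$ (i, p i)) = (\<Prod> i\<in>S. (if p i = i then [:0,1:] else 0))"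
    proof (rule prod.cong[OF refl])
      fix i assume i: "i \<in> S"
      hence iN: "i < n" using S by auto
      show "?C $$ (i, p i) = (if p i = i then [:0,1:] else 0)"
        using iN pi[OF iN] z[OF i pi[OF iN]] A by (auto simp: char_poly_matrix_def)
    qed
    also have "[:0,1:]^card S dvd \<dots>"
    proof (cases "\<forall>i\<in>S. p i = i")
      case True
      then show ?thesis by simp
    next
      case False
      then obtain i where "i \<in> S" "p i \<noteq> i" by auto
      moreover have "finite S" using S finite_subset by blast
      ultimately have "(\<Prod> i\<in>S. (if p i = i then [:0,1:] else 0)) = (0 :: 'a poly)"
        by (intro prod_zero) auto
      then show ?thesis by simp
    qed
    finally show "[:0,1:]^card S dvd signof p * (\<Prod> i=0..<n. ?C $$ (i, p i))"
      unfolding split by (simp add: dvd_mult dvd_mult2)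
  qed
  with eq show ?thesis by simp
qed

lemma diag_mult_vec:
  assumes v: "v < N" and y: "y \<in> carrier_vec N"
  shows "(mat N N (\<lambda>(v,w). if v = w then (d v :: real) else 0) *\<^sub>v y) $ v = d v * y $ v"
proof -
  have "(mat N N (\<lambda>(v,w). if v = w then d v else 0) *\<^sub>v y) $ v = (\<Sum>j\<in>{0..<N}. (if v = j then d v else 0) * y $ j)"
    using v y by (simp add: mult_mat_vec_def scalar_prod_def)
  also have "\<dots> = (\<Sum>j\<in>{0..<N}. if v = j then d v * y $ j else 0)"
    by (rule sum.cong) auto
  also have "\<dots> = d v * y $ v" using v by simp
  finally show ?thesis .
qed

lemma nlap_entry:
  assumes v: "v < N" and x: "x \<in> carrier_vec N"
  shows "(nlap N E *\<^sub>v x) $ v = x $ v - (\<Sum> w\<in>{0..<N}. hadj N E $$ (v,w) * x $ w) / real (hdeg E v)"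
proof -
  let ?D = "mat N N (\<lambda>(v,w). if v = w then 1 / real (hdeg E v) else 0)"
  have D: "?D \<in> carrier_mat N N" by simp
  have A: "hadj N E \<in> carrier_mat N N" by (simp add: hadj_def)
  have "nlap N E *\<^sub>v x = 1\<^sub>m N *\<^sub>v x - (?D * hadj N E) *\<^sub>v x"
    unfolding nlap_def by (rule minus_mult_distrib_mat_vec[OF _ _ x]) (use D A in auto)
  also have "(?D * hadj N E) *\<^sub>v x = ?D *\<^sub>v (hadj N E *\<^sub>v x)"
    by (rule assoc_mult_mat_vec[OF D A x])
  finally have "(nlap N E *\<^sub>v x) $ v = x $ v - (?D *\<^sub>v (hadj N E *\<^sub>v x)) $ v"
    using v x D A by simp
  also have "(?D *\<^sub>v (hadj N E *\<^sub>v x)) $ v = 1 / real (hdeg E v) * (hadj N E *\<^sub>v x) $ v"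
    by (rule diag_mult_vec[OF v]) (use A x in auto)
  also have "(hadj N E *\<^sub>v x) $ v = (\<Sum> w\<in>{0..<N}. hadj N E $$ (v,w) * x $ w)"
    using v x A by (simp add: mult_mat_vec_def scalar_prod_def)
  finally show ?thesis by simp
qed

lemma key_identity:
  assumes E: "E \<subseteq> Pow {0..<N}" and v: "v < N" and deg: "hdeg E v \<ge> 1"
    and x: "x \<in> carrier_vec N"
  shows "real (hdeg E v) * (nlap N E *\<^sub>v x) $ v = (\<Sum> e\<in>{e\<in>E. v\<in>e}. \<Sum> w\<in>e. x$w)"
proof -
  have fE: "finite E" using E finite_subset by (metis finite_Pow_iff finite_atLeastLessThan)
  let ?Ev = "{e\<in>E. v\<in>e}"
  have fEv: "finite ?Ev" using fE by simp
  have "(\<Sum> e\<in>?Ev. \<Sum> w\<in>e. x$w) = (\<Sum> e\<in>?Ev. \<Sum> w\<in>{0..<N}. (if w\<in>e then x$w else 0))"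
  proof (rule sum.cong[OF refl])
    fix e assume "e \<in> ?Ev"
    hence "e \<subseteq> {0..<N}" using E by auto
    hence "{0..<N} \<inter> e = e" by auto
    then show "(\<Sum> w\<in>e. x$w) = (\<Sum> w\<in>{0..<N}. (if w\<in>e then x$w else 0))"
      using sum.inter_restrict[of "{0..<N}" "\<lambda>w. x$w" e] by simp
  qed
  also have "\<dots> = (\<Sum> w\<in>{0..<N}. \<Sum> e\<in>?Ev. (if w\<in>e then x$w else 0))"
    by (rule sum.swap)
  also have "\<dots> = (\<Sum> w\<in>{0..<N}. (if w = v then real (hdeg E v) * x$v else 0) - hadj N E $$ (v,w) * x$w)"
  proof (rule sum.cong[OF refl])
    fix w assume w: "w \<in> {0..<N}"
    have "(\<Sum> e\<in>?Ev. (if w\<in>e then x$w else 0)) = (\<Sum> e\<in>{e\<in>?Ev. w \<in> e}. x$w)"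
      using sum.inter_filter[OF fEv, of "\<lambda>_. x$w" "\<lambda>e. w \<in> e"] by simp
    also have "\<dots> = real (card {e\<in>?Ev. w \<in> e}) * x$w" by simp
    also have "{e\<in>?Ev. w \<in> e} = {e\<in>E. v \<in> e \<and> w \<in> e}" by auto
    finally show "(\<Sum> e\<in>?Ev. (if w\<in>e then x$w else 0)) = (if w = v then real (hdeg E v) * x$v else 0) - hadj N E $$ (v,w) * x$w"
      using w v by (auto simp: hadj_def hdeg_def)
  qed
  also have "\<dots> = real (hdeg E v) * x$v - (\<Sum> w\<in>{0..<N}. hadj N E $$ (v,w) * x$w)"
    using v by (simp add: sum_subtractf)
  also have "\<dots> = real (hdeg E v) * (nlap N E *\<^sub>v x) $ v"
    unfolding nlap_entry[OF v x] using deg by (simp add: field_simps)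
  finally show ?thesis by simp
qed

lemma nlap_carrier[simp]: "nlap N E \<in> carrier_mat N N"
  unfolding nlap_def hadj_def by (rule minus_carrier_mat, rule mult_carrier_mat) auto

lemma eig_nonneg:
  assumes E: "E \<subseteq> Pow {0..<N}" and degs: "\<forall>v<N. hdeg E v \<ge> 1"
    and ev: "eigenvalue (nlap N E) \<mu>"
  shows "\<mu> \<ge> 0"
proof -
  have fE: "finite E" using E finite_subset by (metis finite_Pow_iff finite_atLeastLessThan)
  obtain x where x: "x \<in> carrier_vec N" and x0: "x \<noteq> 0\<^sub>v N" and Lx: "nlap N E *\<^sub>v x = \<mu> \<cdot>\<^sub>v x"
    using ev carrier_matD(1)[OF nlap_carrier[of N E]] unfolding eigenvalue_def eigenvector_def by auto
  define s where "s e = (\<Sum>w\<in>e. x$w)" for e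
  have "(\<Sum>v\<in>{0..<N}. x$v * (real (hdeg E v) * (nlap N E *\<^sub>v x) $ v))
      = (\<Sum>v\<in>{0..<N}. x$v * (\<Sum> e\<in>{e\<in>E. v\<in>e}. s e))"
    by (rule sum.cong[OF refl]) (use key_identity[OF E _ _ x] degs in \<open>auto simp: s_def\<close>)
  also have "\<dots> = (\<Sum>v\<in>{0..<N}. \<Sum> e\<in>E. if v \<in> e then x$v * s e else 0)"
    by (rule sum.cong[OF refl]) (simp add: sum_distrib_left sum.inter_filter[OF fE] if_distrib cong: if_cong)
  also have "\<dots> = (\<Sum> e\<in>E. \<Sum>v\<in>{0..<N}. if v \<in> e then x$v * s e else 0)"
    by (rule sum.swap)
  also have "\<dots> = (\<Sum> e\<in>E. s e * s e)"
  proof (rule sum.cong[OF refl])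
    fix e assume "e \<in> E"
    hence "e \<subseteq> {0..<N}" using E by auto
    hence "{0..<N} \<inter> e = e" by auto
    then show "(\<Sum>v\<in>{0..<N}. if v \<in> e then x$v * s e else 0) = s e * s e"
      using sum.inter_restrict[of "{0..<N}" "\<lambda>w. x$w * s e" e]
      by (simp add: s_def sum_distrib_right)
  qed
  finally have Q: "(\<Sum>v\<in>{0..<N}. x$v * (real (hdeg E v) * (nlap N E *\<^sub>v x) $ v)) \<ge> 0"
    by (simp add: sum_nonneg)
  have "(\<Sum>v\<in>{0..<N}. x$v * (real (hdeg E v) * (nlap N E *\<^sub>v x) $ v))
     = \<mu> * (\<Sum>v\<in>{0..<N}. real (hdeg E v) * (x$v)^2)"
    unfolding Lx sum_distrib_left
    by (rule sum.cong[OF refl]) (use x in \<open>auto simp: power2_eq_square\<close>)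
  with Q have Q2: "\<mu> * (\<Sum>v\<in>{0..<N}. real (hdeg E v) * (x$v)^2) \<ge> 0" by simp
  obtain i where i: "i < N" "x $ i \<noteq> 0"
    using x x0 by (metis carrier_vecD eq_vecI index_zero_vec(1) index_zero_vec(2))
  have "(\<Sum>v\<in>{0..<N}. real (hdeg E v) * (x$v)^2) > 0"
    by (rule sum_pos2[of _ i]) (use i degs in auto)
  with Q2 show ?thesis by (simp add: zero_le_mult_iff)
qed

lemma lambda1_zero:
  assumes E: "E \<subseteq> Pow {0..<N}" and degs: "\<forall>v<N. hdeg E v \<ge> 1"
    and ev: "eigenvalue (nlap N E) 0"
  shows "lambda1 N E = 0"
proof -
  have "{x. eigenvalue (nlap N E) x} \<subseteq> {x. poly (char_poly (nlap N E)) x = 0}"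
    using eigenvalue_root_char_poly[OF nlap_carrier] by auto
  moreover have "char_poly (nlap N E) \<noteq> 0"
    using degree_monic_char_poly[OF nlap_carrier[of N E]] by auto
  ultimately have fin: "finite {x. eigenvalue (nlap N E) x}"
    using poly_roots_finite finite_subset by blast
  show ?thesis unfolding lambda1_def
    by (rule Min_eqI[OF fin]) (use eig_nonneg[OF E degs] ev in auto)
qed

lemma char_poly_kernel_block:
  fixes L :: "real mat"
  assumes L: "L \<in> carrier_mat N N" and R: "R \<subseteq> {0..<N}"
    and uc: "\<And>r. r \<in> R \<Longrightarrow> u r \<in> carrier_vec N"
    and uk: "\<And>r. r \<in> R \<Longrightarrow> L *\<^sub>v u r = 0\<^sub>v N"
    and ud: "\<And>r r'. r \<in> R \<Longrightarrow> r' \<in> R \<Longrightarrow> u r $ r' = (if r' = r then 1 else 0)"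
  shows "[:0,1:]^card R dvd char_poly L"
proof -
  define M where "M = mat N N (\<lambda>(v,w). if w \<in> R \<and> v \<notin> R then u w $ v else 0)"
  define P where "P = 1\<^sub>m N + M"
  define Q where "Q = 1\<^sub>m N - M"
  have Mc: "M \<in> carrier_mat N N" unfolding M_def by simp
  have Pc: "P \<in> carrier_mat N N" unfolding P_def using Mc by simp
  have Qc: "Q \<in> carrier_mat N N" unfolding Q_def using Mc by (rule minus_carrier_mat)
  have MM: "M * M = 0\<^sub>m N N"
  proof (rule eq_matI)
    fix i j assume ij: "i < dim_row (0\<^sub>m N N :: real mat)" "j < dim_col (0\<^sub>m N N :: real mat)"
    have "(M * M) $$ (i,j) = (\<Sum>k\<in>{0..<N}. M $$ (i,k) * M $$ (k,j))"
      using ij Mc by (simp add: scalar_prod_def)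
    also have "\<dots> = 0"
      by (rule sum.neutral) (use ij in \<open>auto simp: M_def\<close>)
    finally show "(M * M) $$ (i,j) = 0\<^sub>m N N $$ (i,j)" using ij by simp
  qed (use Mc in auto)
  have PQ: "P * Q = 1\<^sub>m N"
  proof -
    have "P * Q = P * 1\<^sub>m N - P * M" unfolding Q_def
      by (rule mult_minus_distrib_mat[OF Pc]) (use Mc in auto)
    also have "P * M = 1\<^sub>m N * M + M * M" unfolding P_def
      by (rule add_mult_distrib_mat) (use Mc in auto)
    finally show ?thesis unfolding MM P_def using Mc by (intro eq_matI) auto
  qed
  have QP: "Q * P = 1\<^sub>m N"
  proof -
    have "Q * P = Q * 1\<^sub>m N + Q * M" unfolding P_def
      by (rule mult_add_distrib_mat[OF Qc]) (use Mc in auto)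
    also have "Q * M = 1\<^sub>m N * M - M * M" unfolding Q_def
      by (rule minus_mult_distrib_mat) (use Mc in auto)
    finally show ?thesis unfolding MM Q_def using Mc by (intro eq_matI) auto
  qed
  define B where "B = Q * (L * P)"
  have Bc: "B \<in> carrier_mat N N" unfolding B_def using Qc L Pc by simp
  have LB: "L = P * B * Q"
  proof -
    have LPc: "L * P \<in> carrier_mat N N" using L Pc by simp
    have "(L * P) * Q = L * (P * Q)" by (rule assoc_mult_mat[OF L Pc Qc])
    hence LPQ: "(L * P) * Q = L" unfolding PQ using L by simp
    have "B * Q = Q * ((L * P) * Q)" unfolding B_def by (rule assoc_mult_mat[OF Qc LPc Qc])
    hence BQ: "B * Q = Q * L" unfolding LPQ .
    have "P * B * Q = P * (B * Q)" by (rule assoc_mult_mat[OF Pc Bc Qc])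
    also have "\<dots> = (P * Q) * L" unfolding BQ by (rule assoc_mult_mat[OF Pc Qc L, symmetric])
    also have "\<dots> = L" unfolding PQ using L by simp
    finally show ?thesis by simp
  qed
  have colP: "col P r = u r" if r: "r \<in> R" for r
  proof (rule eq_vecI)
    show "dim_vec (col P r) = dim_vec (u r)" using Pc uc[OF r] by simp
  next
    fix k assume "k < dim_vec (u r)"
    hence k: "k < N" using uc[OF r] by simp
    have rN: "r < N" using r R by auto
    show "col P r $ k = u r $ k"
      using k rN r ud[OF r] Mc by (auto simp: P_def M_def)
  qed
  have Bz: "B $$ (j, r) = 0" if r: "r \<in> R" and j: "j < N" for r j
  proof -
    have rN: "r < N" using r R by auto
    have "col (L * P) r = L *\<^sub>v col P r"
      using L Pc rN by (intro eq_vecI) (auto simp: mult_mat_vec_def)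
    also have "\<dots> = 0\<^sub>v N" using colP[OF r] uk[OF r] by simp
    finally have c0: "col (L * P) r = 0\<^sub>v N" .
    have "B $$ (j, r) = row Q j \<bullet> col (L * P) r"
      unfolding B_def using Qc L Pc j rN by simp
    also have "\<dots> = 0" unfolding c0 using Qc j by simp
    finally show ?thesis .
  qed
  have sim: "similar_mat L B"
    unfolding similar_mat_def similar_mat_wit_def Let_def
    using L Bc Pc Qc PQ QP LB by (intro exI[of _ P] exI[of _ Q]) auto
  have "[:0,1:]^card R dvd char_poly B"
    by (rule char_poly_zero_cols[OF Bc R]) (use Bz in auto)
  then show ?thesis using char_poly_similar[OF sim] by simp
qed

theorem mainTheorem4:
  fixes N c :: nat and E :: "nat set set"
  assumes "c \<ge> 2"
    and "uniform_hypergraph N E c"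
    and "E \<noteq> {}"
  shows "(strong_chromatic N E = c \<longrightarrow>
            lambda1 N E = 0 \<and> eigenvalue (nlap N E) 0 \<and>
            order 0 (char_poly (nlap N E)) \<ge> c - 1)
       \<and> (lambda1 N E = 0 \<longrightarrow>
            (real (strong_chromatic N E) = (real c - lambda1 N E) / (1 - lambda1 N E)
             \<longleftrightarrow> strong_chromatic N E = c))"
proof (rule conjI)
  show "lambda1 N E = 0 \<longrightarrow> (real (strong_chromatic N E) = (real c - lambda1 N E) / (1 - lambda1 N E)
             \<longleftrightarrow> strong_chromatic N E = c)" by simp
next
  show "strong_chromatic N E = c \<longrightarrow>
            lambda1 N E = 0 \<and> eigenvalue (nlap N E) 0 \<and>
            order 0 (char_poly (nlap N E)) \<ge> c - 1"
  proof
  assume chi: "strong_chromatic N E = c"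
  have E: "E \<subseteq> Pow {0..<N}" and cardE: "\<And>e. e \<in> E \<Longrightarrow> card e = c"
    and degs: "\<forall>v<N. hdeg E v \<ge> 1"
    using assms(2) unfolding uniform_hypergraph_def by auto
  have "proper_strong_coloring N E N (\<lambda>v. v + 1)"
    using E unfolding proper_strong_coloring_def by auto
  hence "\<exists>f. proper_strong_coloring N E (strong_chromatic N E) f"
    unfolding strong_chromatic_def by (intro LeastI_ex[of "\<lambda>k. \<exists>f. proper_strong_coloring N E k f"]) blast
  then obtain f where f: "proper_strong_coloring N E c f" using chi by auto
  have frange: "\<And>v. v < N \<Longrightarrow> f v \<in> {1..c}" using f unfolding proper_strong_coloring_def by auto
  have finj: "\<And>e. e \<in> E \<Longrightarrow> inj_on f e"
    using f unfolding proper_strong_coloring_def inj_on_def by metis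
  have fimg: "f ` e = {1..c}" if e: "e \<in> E" for e
  proof -
    have sub: "f ` e \<subseteq> {1..c}" 
    proof
      fix i assume "i \<in> f ` e"
      then obtain w where w: "w \<in> e" "i = f w" by auto
      have "w \<in> {0..<N}" using w(1) e E by blast
      hence "w < N" by simp
      then show "i \<in> {1..c}" using frange w(2) by simp
    qed
    have "card (f ` e) = c" using card_image[OF finj[OF e]] cardE[OF e] by simp
    then show ?thesis using sub by (intro card_subset_eq) auto
  qed
  obtain e0 where e0: "e0 \<in> E" using assms(3) by auto
  have e0N: "e0 \<subseteq> {0..<N}" using e0 E by auto
  define R where "R = {r \<in> e0. f r < c}"
  have RN: "R \<subseteq> {0..<N}" using e0N unfolding R_def by auto
  have "f ` R = {i \<in> f ` e0. i < c}" unfolding R_def by blast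
  also have "\<dots> = {1..<c}" using fimg[OF e0] by auto
  finally have "f ` R = {1..<c}" .
  moreover have "inj_on f R" using finj[OF e0] unfolding R_def by (rule inj_on_subset) auto
  ultimately have cardR: "card R = c - 1" using card_image by fastforce
  define u where "u r = vec N (\<lambda>v. if f v = f r then 1 else if f v = c then -1 else (0::real))" for r
  have uc: "u r \<in> carrier_vec N" for r unfolding u_def by simp
  have esum: "(\<Sum>w\<in>e. u r $ w) = 0" if r: "r \<in> R" and e: "e \<in> E" for r e
  proof -
    define g where "g i = (if i = f r then 1 else 0) - (if i = c then 1 else (0::real))" for i
    have fr: "f r \<in> {1..c}" "f r \<noteq> c" using r frange RN unfolding R_def by auto
    have "(\<Sum>w\<in>e. u r $ w) = (\<Sum>w\<in>e. g (f w))"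
    proof (rule sum.cong[OF refl])
      fix w assume "w \<in> e"
      hence "w \<in> {0..<N}" using e E by blast
      hence "w < N" by simp
      then show "u r $ w = g (f w)" using fr by (simp add: u_def g_def)
    qed
    also have "\<dots> = (\<Sum>i\<in>f ` e. g i)" by (simp add: sum.reindex[OF finj[OF e]])
    also have "\<dots> = (\<Sum>i\<in>{1..c}. g i)" unfolding fimg[OF e] ..
    also have "\<dots> = 0" unfolding g_def sum_subtractf using fr assms(1) by simp
    finally show ?thesis .
  qed
  have uk: "nlap N E *\<^sub>v u r = 0\<^sub>v N" if r: "r \<in> R" for r
  proof (rule eq_vecI)
    fix v assume "v < dim_vec (0\<^sub>v N :: real vec)"
    hence v: "v < N" by simp
    have "real (hdeg E v) * (nlap N E *\<^sub>v u r) $ v = 0"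
      unfolding key_identity[OF E v degs[rule_format, OF v] uc] using esum[OF r] by simp
    moreover have "hdeg E v \<noteq> 0" using degs v by (metis not_one_le_zero)
    ultimately show "(nlap N E *\<^sub>v u r) $ v = 0\<^sub>v N $ v" using v by simp
  qed (use carrier_matD(1)[OF nlap_carrier[of N E]] in simp)
  have ud: "u r $ r' = (if r' = r then 1 else 0)" if "r \<in> R" "r' \<in> R" for r r'
  proof -
    have "f r' = f r \<longleftrightarrow> r' = r" using finj[OF e0] that unfolding R_def inj_on_def by auto
    then show ?thesis using that RN unfolding u_def R_def by auto
  qed
  have dvd: "[:0,1:]^card R dvd char_poly (nlap N E)"
    by (rule char_poly_kernel_block[OF nlap_carrier RN uc uk ud])
  have nz: "char_poly (nlap N E) \<noteq> 0"
    using degree_monic_char_poly[OF nlap_carrier[of N E]] by auto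
  have ord: "order 0 (char_poly (nlap N E)) \<ge> c - 1"
    using dvd nz order_divides[of 0 "card R" "char_poly (nlap N E)"] cardR by simp
  have "R \<noteq> {}" using cardR assms(1) by auto
  then obtain r where r: "r \<in> R" by auto
  have "u r \<noteq> 0\<^sub>v N"
  proof
    assume "u r = 0\<^sub>v N"
    hence "u r $ r = 0" using r RN by auto
    with ud[OF r r] show False by simp
  qed
  hence "eigenvector (nlap N E) (u r) 0"
    unfolding eigenvector_def using uc[of r] uk[OF r] carrier_matD(1)[OF nlap_carrier[of N E]]
    by (auto intro!: eq_vecI)
  hence ev: "eigenvalue (nlap N E) 0" unfolding eigenvalue_def by blast
  show "lambda1 N E = 0 \<and> eigenvalue (nlap N E) 0 \<and> order 0 (char_poly (nlap N E)) \<ge> c - 1"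
    using lambda1_zero[OF E degs ev] ev ord by simp
  qed
qed

end
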